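(* Let $n\le k$ be positive integers and let $\mathcal{A},\mathcal{B}$ be $I$-structures. There is a homomorphism $f:\mathbb{H}_{n,k}\mathcal{A}\to\mathcal{B}$ if and only if Duplicator has a winning strategy in the game $+\mathrm{Fun}^{k}_{n}(\mathcal{A},\mathcal{B})$.
   Context: Structures are over a finite relational signature $\sigma\cup\{I\}$ with $I$ binary; an $I$-structure is one interpreting $I$ as the identity relation. For $m\in\mathbb{N}$, $[m]=\{1,\dots,m\}$. For a structure $\mathcal{A}$, $\mathbb{T}_k\mathcal{A}$ has universe the nonempty finite lists over $A\times[k]$; $\epsilon_{\mathcal{A}}(s)$ is the first component of the last pair of $s$; a tuple $(s_1,\dots,s_r)$ is in a relation $R^{\mathbb{T}_k\mathcal{A}}$ iff the $s_i$ are pairwise prefix-comparable, $(\epsilon_{\mathcal{A}}(s_1),\dots,\epsilon_{\mathcal{A}}(s_r))\in R^{\mathcal{A}}$, and whenever $s_i$ is a prefix of $s_j$ ending with $(a,p)$, no prefix of $s_j$ properly extending $s_i$ ends with a pair $(a',p)$. A list over $A\times[k]$ is basic if it has at most $n$ pairs with distinct pebble indices; $S_n(s)=[s]$ if $s$ is basic, else $S_n(s)=[a];S_n(t)$ with $s=a\cdot t$ and $a$ the longest basic prefix. For $p\in[k]$ and $S_n(s)=t;[s']$ ($s'$ the last block), $\alpha_n(s,p)=t;[s']$ if $|s'|=n$ or $p$ occurs in $s'$, else $t$. $[s;(a,i)]\approx_n[t;(b,j)]$ iff $a=b$ and $\alpha_n(s,i)=\alpha_n(t,j)$. $\mathbb{H}_{n,k}\mathcal{A}=\mathbb{T}_k\mathcal{A}/{\approx_n}$,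 where a tuple of classes is in a relation iff some choice of representatives is in it in $\mathbb{T}_k\mathcal{A}$. The game $+\mathrm{Fun}^{k}_{n}(\mathcal{A},\mathcal{B})$: positions are partial maps $\pi^a:[k]\rightharpoonup A$, $\pi^b:[k]\rightharpoonup B$, initially empty. Each round Duplicator provides a function $h:A\to B$ with $h(\pi^a(i))=\pi^b(i)$ for all $i$ in the domain of $\pi^a$; Spoiler picks $m\le n$ distinct indices $p_1,\dots,p_m\in[k]$ and elements $a_1,\dots,a_m\in A$; the position is updated by $\pi^a(p_l)=a_l$, $\pi^b(p_l)=h(a_l)$, other values unchanged. Spoiler wins if for some relation symbol $R$ of arity $r$ and indices $i_1,\dots,i_r$, $(\pi^a(i_1),\dots,\pi^a(i_r))\in R^{\mathcal{A}}$ but $(\pi^b(i_1),\dots,\pi^b(i_r))\notin R^{\mathcal{B}}$. Duplicator wins by playing forever without Spoiler winning. *)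

theory Defs
  imports Main "HOL-Library.Sublist"
begin

text \<open>A structure over a relational signature with symbol type 'r (finite type
 = finite signature) and arity function ar: a universe together with an
 interpretation of each relation symbol as a set of tuples (lists).\<close>

type_synonym ('r,'a) struc = "'a set \<times> ('r \<Rightarrow> 'a list set)"

abbreviation univ :: "('r,'a) struc \<Rightarrow> 'a set" where "univ M \<equiv> fst M"
abbreviation rel :: "('r,'a) struc \<Rightarrow> 'r \<Rightarrow> 'a list set" where "rel M \<equiv> snd M"

definition wf_struc :: "('r \<Rightarrow> nat) \<Rightarrow> ('r,'a) struc \<Rightarrow> bool" where
  "wf_struc ar M \<longleftrightarrow> (\<forall>R. \<forall>t \<in> rel M R. length t = ar R \<and> set t \<subseteq> univ M)"

definition I_struc :: "'r \<Rightarrow> ('r,'a) struc \<Rightarrow> bool" where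
  "I_struc I M \<longleftrightarrow> rel M I = {[a, a] | a. a \<in> univ M}"

definition is_hom :: "('r,'a) struc \<Rightarrow> ('r,'b) struc \<Rightarrow> ('a \<Rightarrow> 'b) \<Rightarrow> bool" where
  "is_hom M N f \<longleftrightarrow> (\<forall>x \<in> univ M. f x \<in> univ N) \<and> (\<forall>R. \<forall>t \<in> rel M R. map f t \<in> rel N R)"

definition eps :: "('a \<times> nat) list \<Rightarrow> 'a" where
  "eps s = fst (last s)"

definition T_univ :: "nat \<Rightarrow> ('r,'a) struc \<Rightarrow> ('a \<times> nat) list set" where
  "T_univ k A = {s. s \<noteq> [] \<and> set s \<subseteq> univ A \<times> {1..k}}"

definition T_rel :: "nat \<Rightarrow> ('r,'a) struc \<Rightarrow> 'r \<Rightarrow> ('a \<times> nat) list list set" where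
  "T_rel k A R = {ss. set ss \<subseteq> T_univ k A
      \<and> (\<forall>s\<in>set ss. \<forall>t\<in>set ss. prefix s t \<or> prefix t s)
      \<and> map eps ss \<in> rel A R
      \<and> (\<forall>s\<in>set ss. \<forall>t\<in>set ss. prefix s t \<longrightarrow>
            (\<forall>u. prefix u t \<and> strict_prefix s u \<longrightarrow> snd (last u) \<noteq> snd (last s)))}"

definition T_struc :: "nat \<Rightarrow> ('r,'a) struc \<Rightarrow> ('r, ('a \<times> nat) list) struc" where
  "T_struc k A = (T_univ k A, T_rel k A)"

definition basic :: "nat \<Rightarrow> ('a \<times> nat) list \<Rightarrow> bool" where
  "basic n s \<longleftrightarrow> length s \<le> n \<and> distinct (map snd s)"

definition lbp :: "nat \<Rightarrow> ('a \<times> nat) list \<Rightarrow> nat" where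
  "lbp n s = (GREATEST i. i \<le> length s \<and> basic n (take i s))"

lemma basic_Nil: "basic n []" by (simp add: basic_def)

text \<open>S_n; the guard lbp = 0 only matters for n = 0 (for n >= 1 every nonempty
 list has a nonempty basic prefix).\<close>
function blocks :: "nat \<Rightarrow> ('a \<times> nat) list \<Rightarrow> ('a \<times> nat) list list" where
  "blocks n s = (if basic n s \<or> lbp n s = 0 then [s]
                 else take (lbp n s) s # blocks n (drop (lbp n s) s))"
  by auto
termination
  apply (relation "measure (\<lambda>(n, s). length s)")
   apply auto
  apply (case_tac s)
   apply (auto simp: basic_Nil)
  done

definition alpha :: "nat \<Rightarrow> ('a \<times> nat) list \<Rightarrow> nat \<Rightarrow> ('a \<times> nat) list list" where
  "alpha n s p = (let S = blocks n s; s' = last S in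
      if length s' = n \<or> p \<in> snd ` set s' then S else butlast S)"

definition approx :: "nat \<Rightarrow> ('a \<times> nat) list \<Rightarrow> ('a \<times> nat) list \<Rightarrow> bool" where
  "approx n s t \<longleftrightarrow> fst (last s) = fst (last t)
      \<and> alpha n (butlast s) (snd (last s)) = alpha n (butlast t) (snd (last t))"

definition approx_rel :: "nat \<Rightarrow> nat \<Rightarrow> ('r,'a) struc \<Rightarrow> (('a \<times> nat) list \<times> ('a \<times> nat) list) set" where
  "approx_rel n k A = {(s, t). s \<in> T_univ k A \<and> t \<in> T_univ k A \<and> approx n s t}"

definition H_univ :: "nat \<Rightarrow> nat \<Rightarrow> ('r,'a) struc \<Rightarrow> ('a \<times> nat) list set set" where
  "H_univ n k A = T_univ k A // approx_rel n k A"

definition H_rel :: "nat \<Rightarrow> nat \<Rightarrow> ('r,'a) struc \<Rightarrow> 'r \<Rightarrow> ('a \<times> nat) list set list set" where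
  "H_rel n k A R = {cs. set cs \<subseteq> H_univ n k A \<and>
      (\<exists>ss \<in> T_rel k A R. list_all2 (\<in>) ss cs)}"

definition H_struc :: "nat \<Rightarrow> nat \<Rightarrow> ('r,'a) struc \<Rightarrow> ('r, ('a \<times> nat) list set) struc" where
  "H_struc n k A = (H_univ n k A, H_rel n k A)"

definition valid_move :: "nat \<Rightarrow> nat \<Rightarrow> ('r,'a) struc \<Rightarrow> (nat \<times> 'a) list \<Rightarrow> bool" where
  "valid_move n k A m \<longleftrightarrow> length m \<le> n \<and> distinct (map fst m) \<and> set m \<subseteq> {1..k} \<times> univ A"

type_synonym ('a,'b) pos = "(nat \<rightharpoonup> 'a) \<times> (nat \<rightharpoonup> 'b)"

definition upd :: "('a \<Rightarrow> 'b) \<Rightarrow> ('a,'b) pos \<Rightarrow> (nat \<times> 'a) list \<Rightarrow> ('a,'b) pos" where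
  "upd h pos m = fold (\<lambda>(p, a) (x, y). (x(p \<mapsto> a), y(p \<mapsto> h a))) m pos"

text \<open>Duplicator strategies: functions from the history of Spoiler moves to h.\<close>
fun play :: "((nat \<times> 'a) list list \<Rightarrow> 'a \<Rightarrow> 'b) \<Rightarrow> (nat \<times> 'a) list list \<Rightarrow> ('a,'b) pos
              \<Rightarrow> (nat \<times> 'a) list list \<Rightarrow> ('a,'b) pos" where
  "play S hist pos [] = pos"
| "play S hist pos (m # ms) = play S (hist @ [m]) (upd (S hist) pos m) ms"

definition run :: "((nat \<times> 'a) list list \<Rightarrow> 'a \<Rightarrow> 'b) \<Rightarrow> (nat \<times> 'a) list list \<Rightarrow> ('a,'b) pos" where
  "run S ms = play S [] (Map.empty, Map.empty) ms"

definition spoiler_wins :: "('r,'a) struc \<Rightarrow> ('r,'b) struc \<Rightarrow> ('a,'b) pos \<Rightarrow> bool" where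
  "spoiler_wins A B pos \<longleftrightarrow> (\<exists>R is. set is \<subseteq> dom (fst pos) \<inter> dom (snd pos)
      \<and> map (the \<circ> fst pos) is \<in> rel A R \<and> map (the \<circ> snd pos) is \<notin> rel B R)"

definition dup_legal :: "('r,'a) struc \<Rightarrow> ('r,'b) struc \<Rightarrow> ('a,'b) pos \<Rightarrow> ('a \<Rightarrow> 'b) \<Rightarrow> bool" where
  "dup_legal A B pos h \<longleftrightarrow> (\<forall>x \<in> univ A. h x \<in> univ B)
      \<and> (\<forall>i \<in> dom (fst pos). fst pos i \<noteq> None \<and> Some (h (the (fst pos i))) = snd pos i)"

definition winning_strategy :: "nat \<Rightarrow> nat \<Rightarrow> ('r,'a) struc \<Rightarrow> ('r,'b) struc
      \<Rightarrow> ((nat \<times> 'a) list list \<Rightarrow> 'a \<Rightarrow> 'b) \<Rightarrow> bool" where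
  "winning_strategy n k A B S \<longleftrightarrow> (\<forall>ms. (\<forall>m \<in> set ms. valid_move n k A m) \<longrightarrow>
      dup_legal A B (run S ms) (S ms) \<and> \<not> spoiler_wins A B (run S ms))"

definition duplicator_wins :: "nat \<Rightarrow> nat \<Rightarrow> ('r,'a) struc \<Rightarrow> ('r,'b) struc \<Rightarrow> bool" where
  "duplicator_wins n k A B \<longleftrightarrow> (\<exists>S. winning_strategy n k A B S)"

end

theory Submission
  imports Defs
begin

declare blocks.simps[simp del]

lemma basic_prefix: "basic n s \<Longrightarrow> prefix t s \<Longrightarrow> basic n t"
  by (auto simp: basic_def prefix_def)

lemma basic_snoc: "basic n y \<Longrightarrow> basic n (y @ [(a,p)]) \<longleftrightarrow> length y < n \<and> p \<notin> snd ` set y"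
  by (auto simp: basic_def)

lemma basic_single: "0 < n \<Longrightarrow> basic n [x]"
  by (auto simp: basic_def)

fun greedy :: "nat \<Rightarrow> ('a \<times> nat) list list \<Rightarrow> bool" where
  "greedy n [] = True"
| "greedy n [y] = (y \<noteq> [] \<and> basic n y)"
| "greedy n (y # z # T) = (y \<noteq> [] \<and> basic n y \<and> \<not> basic n (y @ [hd z]) \<and> greedy n (z # T))"

lemma greedy_Cons: "greedy n (y # T) \<longleftrightarrow> y \<noteq> [] \<and> basic n y \<and> greedy n T \<and>
   (T \<noteq> [] \<longrightarrow> \<not> basic n (y @ [hd (hd T)]))"
  by (cases T) auto

lemma greedy_append: "greedy n (T @ U) \<longleftrightarrow> greedy n T \<and> greedy n U \<and>
   (T \<noteq> [] \<and> U \<noteq> [] \<longrightarrow> \<not> basic n (last T @ [hd (hd U)]))"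
  by (induction T) (auto simp: greedy_Cons)

lemma greedy_blockD: "greedy n T \<Longrightarrow> b \<in> set T \<Longrightarrow> b \<noteq> [] \<and> basic n b"
  by (induction T) (auto simp: greedy_Cons)


lemma lbp_facts:
  assumes "0 < n" "s \<noteq> []"
  shows "lbp n s \<le> length s \<and> basic n (take (lbp n s) s) \<and> 1 \<le> lbp n s
         \<and> (\<forall>i. lbp n s < i \<and> i \<le> length s \<longrightarrow> \<not> basic n (take i s))"
proof -
  let ?P = "\<lambda>i. i \<le> length s \<and> basic n (take i s)"
  have P1: "?P 1" using assms by (cases s) (auto simp: basic_def)
  have bd: "\<And>y. ?P y \<Longrightarrow> y \<le> length s" by simp
  have "?P (lbp n s)" unfolding lbp_def by (rule GreatestI_nat[where P="?P", OF P1 bd])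
  moreover have "1 \<le> lbp n s" unfolding lbp_def by (rule Greatest_le_nat[where P="?P", OF P1 bd])
  moreover have "\<forall>i. lbp n s < i \<and> i \<le> length s \<longrightarrow> \<not> basic n (take i s)"
  proof (intro allI impI)
    fix i assume i: "lbp n s < i \<and> i \<le> length s"
    show "\<not> basic n (take i s)"
    proof
      assume "basic n (take i s)"
      then have "i \<le> lbp n s" unfolding lbp_def using i by (intro Greatest_le_nat[of ?P i]) auto
      with i show False by simp
    qed
  qed
  ultimately show ?thesis by blast
qed

lemma blocks_greedy:
  "0 < n \<Longrightarrow> s \<noteq> [] \<Longrightarrow> greedy n (blocks n s) \<and> concat (blocks n s) = s \<and> blocks n s \<noteq> []"
proof (induction n s rule: blocks.induct)
  case (1 n s)
  note F = lbp_facts[OF 1(2,3)]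
  show ?case
  proof (cases "basic n s")
    case True
    then have "blocks n s = [s]" by (subst blocks.simps) simp
    then show ?thesis using 1 True by simp
  next
    case False
    let ?l = "lbp n s"
    have l0: "?l \<noteq> 0" using F by auto
    have ll: "?l < length s"
    proof -
      have "?l \<le> length s" using F by blast
      moreover have "?l \<noteq> length s" using F False by auto
      ultimately show ?thesis by simp
    qed
    have ne: "drop ?l s \<noteq> []" using ll by simp
    have IH: "greedy n (blocks n (drop ?l s)) \<and> concat (blocks n (drop ?l s)) = drop ?l s \<and> blocks n (drop ?l s) \<noteq> []"
      using 1(1)[OF _ 1(2) ne] False l0 by auto
    then obtain z T where zT: "blocks n (drop ?l s) = z # T" by (cases "blocks n (drop ?l s)") auto
    have zne: "z \<noteq> []" using IH zT by (simp add: greedy_Cons)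
    have "concat (z # T) = drop ?l s" using IH zT by simp
    then have hz: "hd z = hd (drop ?l s)" using zne by (metis concat.simps(2) hd_append2)
    have "take (Suc ?l) s = take ?l s @ [hd (drop ?l s)]"
      using ll by (simp add: take_Suc_conv_app_nth hd_drop_conv_nth)
    moreover have "\<not> basic n (take (Suc ?l) s)" using F ll by simp
    ultimately have nb: "\<not> basic n (take ?l s @ [hd z])" using hz by simp
    have "blocks n s = take ?l s # blocks n (drop ?l s)" using False l0 by (subst blocks.simps) auto
    then show ?thesis using IH zT nb F l0 by (auto simp: greedy_Cons)
  qed
qed


lemma greedy_ne_concat: "greedy n T \<Longrightarrow> T \<noteq> [] \<Longrightarrow> concat T \<noteq> []"
  by (cases T) (auto simp: greedy_Cons)

lemma greedy_lt_False:
  assumes "greedy n (y # R1)" "greedy n (y' # R2)" "concat (y # R1) = concat (y' # R2)"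
    "length y < length y'"
  shows False
proof -
  have by': "basic n y'" using assms(2) by (simp add: greedy_Cons)
  have R1: "R1 \<noteq> []"
  proof
    assume "R1 = []"
    then have "length (concat (y # R1)) = length y" by simp
    moreover have "length y' \<le> length (concat (y' # R2))" by simp
    ultimately show False using assms(3,4) \<open>R1 = []\<close> by simp
  qed
  then obtain z R where zR: "R1 = z # R" by (cases R1) auto
  have zne: "z \<noteq> []" and nb: "\<not> basic n (y @ [hd z])" using assms(1) zR by (auto simp: greedy_Cons)
  have p1: "prefix (y @ [hd z]) (concat (y # R1))" using zR zne
    by (metis concat.simps(2) hd_Cons_tl append_Cons append_Nil prefixI append_assoc same_prefix_prefix prefix_prefix prefix_order.refl)
  have p2: "prefix y' (concat (y # R1))" using assms(3) by (simp add: prefixI)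
  have "prefix (y @ [hd z]) y'" using prefix_length_prefix[OF p1 p2] assms(4) by simp
  with by' nb show False using basic_prefix by blast
qed

lemma greedy_unique: "greedy n T1 \<Longrightarrow> greedy n T2 \<Longrightarrow> concat T1 = concat T2 \<Longrightarrow> T1 = T2"
proof (induction T1 arbitrary: T2)
  case Nil
  then show ?case using greedy_ne_concat by fastforce
next
  case (Cons y R1)
  then have "T2 \<noteq> []" using greedy_ne_concat by fastforce
  then obtain y' R2 where T2: "T2 = y' # R2" by (cases T2) auto
  have "\<not> length y < length y'" using greedy_lt_False Cons.prems T2 by metis
  moreover have "\<not> length y' < length y" using greedy_lt_False Cons.prems T2 by metis
  ultimately have "length y = length y'" by simp
  moreover have "prefix y (concat T2)" using Cons.prems(3) T2 by (metis concat.simps(2) prefixI)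
  moreover have "prefix y' (concat T2)" using T2 by (simp add: prefixI)
  ultimately have "y = y'" by (metis prefix_length_prefix order_refl prefix_order.antisym)
  then show ?case using Cons T2 by (auto simp: greedy_Cons)
qed

lemma blocks_concat: "0 < n \<Longrightarrow> greedy n T \<Longrightarrow> T \<noteq> [] \<Longrightarrow> blocks n (concat T) = T"
  using blocks_greedy greedy_unique greedy_ne_concat by metis

lemma blocks_Nil: "blocks n [] = [[]]"
  by (subst blocks.simps) (simp add: basic_Nil)

lemma blocks_basic: "0 < n \<Longrightarrow> b \<in> set (blocks n s) \<Longrightarrow> basic n b \<and> set b \<subseteq> set s"
proof (cases "s = []")
  case True
  then show "b \<in> set (blocks n s) \<Longrightarrow> basic n b \<and> set b \<subseteq> set s" by (simp add: blocks_Nil basic_Nil)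
next
  case False
  assume "0 < n" "b \<in> set (blocks n s)"
  then show ?thesis using blocks_greedy[OF _ False] greedy_blockD
    by (metis concat_map_singleton set_concat UN_upper map_ident)
qed

lemma alpha_eq: "0 < n \<Longrightarrow> alpha n s p = (let S = blocks n s in
    if basic n (last S @ [(a,p)]) then butlast S else S)"
proof -
  assume n: "0 < n"
  have "last (blocks n s) \<in> set (blocks n s)"
    by (cases "s = []") (auto simp: blocks_Nil dest: blocks_greedy[OF n])
  then have "basic n (last (blocks n s))" using blocks_basic n by blast
  then show ?thesis unfolding alpha_def Let_def
    by (subst basic_snoc) (auto simp: basic_def)
qed


lemma greedy_split:
  "greedy n T \<Longrightarrow> prefix (t @ [x]) (concat T) \<Longrightarrow>
   \<exists>T1 b1 b2 T2. T = T1 @ [b1 @ [x] @ b2] @ T2 \<and> t = concat T1 @ b1"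
proof (induction T arbitrary: t)
  case Nil
  then show ?case by simp
next
  case (Cons y R)
  show ?case
  proof (cases "length t < length y")
    case True
    have "prefix (t @ [x]) y"
      using prefix_length_prefix[OF Cons.prems(2), of y] True by (simp add: prefixI)
    then obtain b2 where "y = t @ [x] @ b2" by (auto simp: prefix_def)
    then show ?thesis by (intro exI[of _ "[]"] exI[of _ t] exI[of _ b2] exI[of _ R]) simp
  next
    case False
    have "prefix y (t @ [x])"
      using prefix_length_prefix[of y "concat (y # R)" "t @ [x]"] Cons.prems(2) False
      by (simp add: prefixI)
    then have "prefix y t \<or> y = t @ [x]" by (metis prefix_snoc)
    then have "prefix y t" using False by auto
    then obtain t' where t': "t = y @ t'" by (auto simp: prefix_def)
    have "prefix (t' @ [x]) (concat R)" using Cons.prems(2) t' by simp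
    moreover have "greedy n R" using Cons.prems(1) by (simp add: greedy_Cons)
    ultimately obtain T1 b1 b2 T2 where "R = T1 @ [b1 @ [x] @ b2] @ T2 \<and> t' = concat T1 @ b1"
      using Cons.IH by blast
    then show ?thesis using t' by (intro exI[of _ "y # T1"] exI[of _ b1] exI[of _ b2] exI[of _ T2]) simp
  qed
qed

lemma alpha_split:
  assumes n: "0 < n" and g: "greedy n (T1 @ [b1 @ [(a,p)] @ b2] @ T2)"
  shows "alpha n (concat T1 @ b1) p = T1"
proof -
  let ?b = "b1 @ [(a,p)] @ b2"
  have g1: "greedy n (T1 @ [?b])" using g greedy_append[of n "T1 @ [?b]" T2] by simp
  then have gT1: "greedy n T1" and bb: "basic n ?b"
    and ch: "T1 \<noteq> [] \<longrightarrow> \<not> basic n (last T1 @ [hd ?b])"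
    using greedy_append[of n T1 "[?b]"] by auto
  show ?thesis
  proof (cases "b1 = []")
    case False
    have bb1: "basic n (b1 @ [(a,p)])" using bb basic_prefix[of n ?b "b1 @ [(a,p)]"] by (simp add: prefixI)
    have "hd ?b = hd b1" using False by simp
    then have "greedy n (T1 @ [b1])" using gT1 ch bb1 False basic_prefix[of n "b1 @ [(a,p)]" b1]
      by (auto simp: greedy_append prefixI)
    then have bl: "blocks n (concat T1 @ b1) = T1 @ [b1]" using blocks_concat[OF n] by fastforce
    show ?thesis using alpha_eq[OF n, of "concat T1 @ b1" p a] bl bb1 by simp
  next
    case True
    show ?thesis
    proof (cases "T1 = []")
      case True
      then show ?thesis using \<open>b1 = []\<close> n by (simp add: alpha_def blocks_Nil)
    next
      case False
      have bl: "blocks n (concat T1) = T1" using blocks_concat[OF n gT1 False] .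
      have "\<not> basic n (last T1 @ [(a,p)])" using ch False \<open>b1 = []\<close> by simp
      then show ?thesis using alpha_eq[OF n, of "concat T1" p a] bl \<open>b1 = []\<close> by simp
    qed
  qed
qed


lemma play_append: "play S hist pos (ms1 @ ms2) = play S (hist @ ms1) (play S hist pos ms1) ms2"
  by (induction ms1 arbitrary: hist pos) auto

lemma run_snoc: "run S (ms @ [m]) = upd (S ms) (run S ms) m"
  unfolding run_def by (simp add: play_append)

lemma upd_Cons: "upd h pos ((p,a) # m) = upd h ((fst pos)(p \<mapsto> a), (snd pos)(p \<mapsto> h a)) m"
  by (cases pos) (simp add: upd_def)

lemma upd_other: "p \<notin> fst ` set m \<Longrightarrow>
  fst (upd h pos m) p = fst pos p \<and> snd (upd h pos m) p = snd pos p"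
proof (induction m arbitrary: pos)
  case Nil
  then show ?case by (simp add: upd_def)
next
  case (Cons x m)
  obtain q b where x: "x = (q,b)" by (cases x)
  show ?case using Cons x by (simp add: upd_Cons)
qed

lemma upd_in: "distinct (map fst m) \<Longrightarrow> (p,a) \<in> set m \<Longrightarrow>
  fst (upd h pos m) p = Some a \<and> snd (upd h pos m) p = Some (h a)"
proof (induction m arbitrary: pos)
  case Nil
  then show ?case by simp
next
  case (Cons x m)
  obtain q b where x: "x = (q,b)" by (cases x)
  show ?case
  proof (cases "q = p")
    case True
    then have "p \<notin> fst ` set m" using Cons.prems x by auto
    moreover have "b = a" using Cons.prems x True by (auto simp: image_iff)
    moreover note upd_other[OF \<open>p \<notin> fst ` set m\<close>, of h "((fst pos)(p \<mapsto> a), (snd pos)(p \<mapsto> h a))"]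
    ultimately show ?thesis using x True by (simp add: upd_Cons)
  next
    case False
    then show ?thesis using Cons x by (simp add: upd_Cons)
  qed
qed

lemma play_other: "p \<notin> fst ` set (concat ms) \<Longrightarrow>
  fst (play S hist pos ms) p = fst pos p \<and> snd (play S hist pos ms) p = snd pos p"
proof (induction ms arbitrary: hist pos)
  case Nil
  then show ?case by simp
next
  case (Cons m ms)
  have p1: "p \<notin> fst ` set m" and p2: "p \<notin> fst ` set (concat ms)" using Cons.prems by auto
  have "fst (play S (hist @ [m]) (upd (S hist) pos m) ms) p = fst (upd (S hist) pos m) p \<and>
        snd (play S (hist @ [m]) (upd (S hist) pos m) ms) p = snd (upd (S hist) pos m) p"
    using Cons.IH[OF p2] by blast
  then show ?case using upd_other[OF p1, of "S hist" pos] by simp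
qed

lemma run_pebble:
  assumes "distinct (map fst m)" "(p,a) \<in> set m" "p \<notin> fst ` set (concat ms2)"
  shows "fst (run S (ms1 @ [m] @ ms2)) p = Some a \<and> snd (run S (ms1 @ [m] @ ms2)) p = Some (S ms1 a)"
proof -
  have "run S (ms1 @ [m] @ ms2) = play S ((ms1 @ [m])) (run S (ms1 @ [m])) ms2"
    unfolding run_def using play_append[of S "[]" _ "ms1 @ [m]" ms2] by simp
  moreover have "fst (play S ((ms1 @ [m])) (run S (ms1 @ [m])) ms2) p = fst (run S (ms1 @ [m])) p \<and>
     snd (play S ((ms1 @ [m])) (run S (ms1 @ [m])) ms2) p = snd (run S (ms1 @ [m])) p"
    using play_other[OF assms(3)] by blast
  moreover have "fst (run S (ms1 @ [m])) p = Some a \<and> snd (run S (ms1 @ [m])) p = Some (S ms1 a)"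
    using upd_in[OF assms(1,2)] run_snoc[of S ms1 m] by simp
  ultimately show ?thesis by simp
qed


definition swp :: "('a \<times> nat) list \<Rightarrow> (nat \<times> 'a) list" where
  "swp b = map (\<lambda>(a,p). (p,a)) b"

definition fv :: "((nat \<times> 'a) list list \<Rightarrow> 'a \<Rightarrow> 'b) \<Rightarrow> nat \<Rightarrow> ('a \<times> nat) list \<Rightarrow> 'b" where
  "fv S n s = S (map swp (alpha n (butlast s) (snd (last s)))) (fst (last s))"

lemma swp_set: "(p,a) \<in> set (swp b) \<longleftrightarrow> (a,p) \<in> set b"
  by (auto simp: swp_def)

lemma swp_fst: "fst ` set (swp b) = snd ` set b"
  by (force simp: swp_def)

lemma swp_concat: "concat (map swp T) = swp (concat T)"
  unfolding swp_def by (induction T) auto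

lemma valid_swp: "basic n b \<Longrightarrow> set b \<subseteq> univ A \<times> {1..k} \<Longrightarrow> valid_move n k A (swp b)"
  unfolding valid_move_def basic_def swp_def
  by (auto simp: case_prod_beta comp_def)

lemma alpha_sub: "b \<in> set (alpha n s p) \<Longrightarrow> b \<in> set (blocks n s)"
  by (auto simp: alpha_def Let_def dest: in_set_butlastD split: if_splits)

lemma alpha_valid:
  assumes n: "0 < n" and s: "s \<in> T_univ k A"
  shows "\<forall>m \<in> set (map swp (alpha n (butlast s) p)). valid_move n k A m"
proof
  fix m assume "m \<in> set (map swp (alpha n (butlast s) p))"
  then obtain b where b: "b \<in> set (alpha n (butlast s) p)" "m = swp b" by auto
  then have "basic n b \<and> set b \<subseteq> set (butlast s)" using alpha_sub blocks_basic[OF n] by blast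
  moreover have "set (butlast s) \<subseteq> univ A \<times> {1..k}" using s
    by (auto simp: T_univ_def dest: in_set_butlastD)
  ultimately show "valid_move n k A m" using b valid_swp by blast
qed

lemma approx_fv: "approx n s t \<Longrightarrow> fv S n s = fv S n t"
  by (simp add: approx_def fv_def)

lemma H_univ_cases:
  assumes "c \<in> H_univ n k A"
  obtains s0 where "s0 \<in> T_univ k A" "s0 \<in> c" "\<And>s. s \<in> c \<Longrightarrow> s \<in> T_univ k A \<and> approx n s0 s"
proof -
  obtain s0 where s0: "s0 \<in> T_univ k A" "c = approx_rel n k A `` {s0}"
    using assms unfolding H_univ_def quotient_def by blast
  have "(s0, s0) \<in> approx_rel n k A" using s0(1) by (simp add: approx_rel_def approx_def)
  then have i: "s0 \<in> c" using s0(2) by simp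
  have ii: "s \<in> T_univ k A \<and> approx n s0 s" if "s \<in> c" for s
  proof -
    have "(s0, s) \<in> approx_rel n k A" using that s0(2) by simp
    then show ?thesis by (simp add: approx_rel_def)
  qed
  show ?thesis using that[OF s0(1) i ii] .
qed

lemma nolater:
  assumes "\<forall>u. prefix u (s @ r) \<and> strict_prefix s u \<longrightarrow> snd (last u) \<noteq> p"
  shows "p \<notin> snd ` set r"
proof
  assume "p \<in> snd ` set r"
  then obtain y where y: "y \<in> set r" "snd y = p" by auto
  then obtain r1 r2 where "r = r1 @ y # r2" by (meson split_list)
  then have "prefix (s @ r1 @ [y]) (s @ r) \<and> strict_prefix s (s @ r1 @ [y])"
    by (auto simp: prefix_def strict_prefix_def)
  then show False using assms y by fastforce
qed

lemma last_prefix_max: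
  assumes "ss \<noteq> []" "\<forall>s\<in>set ss. \<forall>t\<in>set ss. prefix s t \<or> prefix t s"
  shows "\<exists>sm\<in>set ss. \<forall>s\<in>set ss. prefix s sm"
proof -
  let ?M = "Max (length ` set ss)"
  have "?M \<in> length ` set ss" using assms(1) by simp
  then obtain sm where sm: "sm \<in> set ss" "length sm = ?M" by auto
  have "\<forall>s\<in>set ss. prefix s sm"
  proof
    fix s assume s: "s \<in> set ss"
    then have "length s \<le> length sm" using sm by simp
    have "prefix s sm \<or> prefix sm s" using assms(2) s sm(1) by blast
    then show "prefix s sm"
    proof
      assume "prefix sm s"
      then obtain z where "s = sm @ z" by (auto simp: prefix_def)
      then show "prefix s sm" using \<open>length s \<le> length sm\<close> by simp
    qed
  qed
  then show ?thesis using sm by blast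
qed

lemma dir_game_to_hom:
  assumes n: "0 < n" and ws: "winning_strategy n k A B S"
  shows "is_hom (H_struc n k A) B (\<lambda>c. fv S n (SOME s. s \<in> c))"
proof -
  define f where "f = (\<lambda>c. fv S n (SOME s. s \<in> c))"
  have fc: "f c = fv S n s" if cH: "c \<in> H_univ n k A" and sc: "s \<in> c" for c s
  proof -
    obtain s0 where s0: "s0 \<in> T_univ k A" "s0 \<in> c" "\<And>s. s \<in> c \<Longrightarrow> s \<in> T_univ k A \<and> approx n s0 s"
      using H_univ_cases[OF cH] by blast
    have "(SOME s. s \<in> c) \<in> c" using s0(2) by (rule someI)
    then have "f c = fv S n s0" unfolding f_def using s0(3) approx_fv by metis
    also have "\<dots> = fv S n s" using s0(3)[OF sc] approx_fv by metis
    finally show ?thesis .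
  qed
  have univ: "f c \<in> univ B" if cH: "c \<in> H_univ n k A" for c
  proof -
    obtain s0 where s0: "s0 \<in> T_univ k A" "s0 \<in> c"
      using H_univ_cases[OF cH] by blast
    have v: "\<forall>m \<in> set (map swp (alpha n (butlast s0) (snd (last s0)))). valid_move n k A m"
      using alpha_valid[OF n s0(1)] .
    have "s0 \<noteq> []" "set s0 \<subseteq> univ A \<times> {1..k}" using s0(1) by (auto simp: T_univ_def)
    then have "last s0 \<in> univ A \<times> {1..k}" using last_in_set by blast
    then have el: "fst (last s0) \<in> univ A" by auto
    have "dup_legal A B (run S (map swp (alpha n (butlast s0) (snd (last s0)))))
             (S (map swp (alpha n (butlast s0) (snd (last s0)))))"
      using ws v unfolding winning_strategy_def by blast
    then have "fv S n s0 \<in> univ B" using el unfolding dup_legal_def fv_def by blast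
    then show ?thesis using fc[OF cH s0(2)] by simp
  qed
  have rel: "map f cs \<in> rel B R" if cR: "cs \<in> H_rel n k A R" for cs R
  proof -
    obtain ss where ss: "ss \<in> T_rel k A R" "list_all2 (\<in>) ss cs" and cs: "set cs \<subseteq> H_univ n k A"
      using cR unfolding H_rel_def by blast
    have mf: "map f cs = map (fv S n) ss"
    proof (rule nth_equalityI)
      show "length (map f cs) = length (map (fv S n) ss)" using ss(2) by (simp add: list_all2_lengthD)
    next
      fix i assume "i < length (map f cs)"
      then have i: "i < length cs" "i < length ss" using ss(2) by (auto simp: list_all2_lengthD)
      then have "ss ! i \<in> cs ! i" using ss(2) by (simp add: list_all2_conv_all_nth)
      moreover have "cs ! i \<in> H_univ n k A" using cs i by auto
      ultimately show "map f cs ! i = map (fv S n) ss ! i" using fc i by simp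
    qed
    have ssT: "set ss \<subseteq> T_univ k A" and cmp: "\<forall>s\<in>set ss. \<forall>t\<in>set ss. prefix s t \<or> prefix t s"
      and ea: "map eps ss \<in> rel A R"
      and nl: "\<forall>s\<in>set ss. \<forall>t\<in>set ss. prefix s t \<longrightarrow>
            (\<forall>u. prefix u t \<and> strict_prefix s u \<longrightarrow> snd (last u) \<noteq> snd (last s))"
      using ss(1) unfolding T_rel_def by auto
    have "map (fv S n) ss \<in> rel B R"
    proof (cases "ss = []")
      case True
      have "\<not> spoiler_wins A B (run S [])" using ws unfolding winning_strategy_def by simp
      moreover have "[] \<in> rel A R" using True ea by simp
      moreover have "spoiler_wins A B (run S [])" if "[] \<in> rel A R" "[] \<notin> rel B R"
        unfolding spoiler_wins_def using that by (intro exI[of _ R] exI[of _ "[]"]) simp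
      ultimately show ?thesis using True by auto
    next
      case False
      obtain sm where sm: "sm \<in> set ss" "\<forall>s\<in>set ss. prefix s sm" using last_prefix_max[OF False cmp] by blast
      have smT: "sm \<in> T_univ k A" using sm ssT by auto
      then have smne: "sm \<noteq> []" by (simp add: T_univ_def)
      define T where "T = blocks n sm"
      have gT: "greedy n T" and cT: "concat T = sm" using blocks_greedy[OF n smne] T_def by auto
      define pos where "pos = run S (map swp T)"
      have valid: "\<forall>m\<in>set (map swp T). valid_move n k A m"
      proof
        fix m assume "m \<in> set (map swp T)"
        then obtain b where b: "b \<in> set T" "m = swp b" by auto
        then have "basic n b \<and> set b \<subseteq> set sm" using blocks_basic[OF n] T_def by blast
        moreover have "set sm \<subseteq> univ A \<times> {1..k}" using smT by (simp add: T_univ_def)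
        ultimately show "valid_move n k A m" using b valid_swp by blast
      qed
      have key: "fst pos (snd (last s)) = Some (fst (last s)) \<and> snd pos (snd (last s)) = Some (fv S n s)"
        if s: "s \<in> set ss" for s
      proof -
        have sne: "s \<noteq> []" using s ssT by (auto simp: T_univ_def)
        obtain t a p where sdec: "s = t @ [(a,p)]" using sne by (cases s rule: rev_cases) auto
        have ap: "last s = (a,p)" and bs: "butlast s = t" using sdec by simp_all
        have "prefix (t @ [(a,p)]) (concat T)" using sm(2) s cT sdec by simp
        then obtain T1 b1 b2 T2 where dec: "T = T1 @ [b1 @ [(a,p)] @ b2] @ T2" "t = concat T1 @ b1"
          using greedy_split[OF gT] by blast
        have al: "alpha n (butlast s) p = T1" using alpha_split[OF n] gT dec bs by simp
        have smdec: "sm = s @ (b2 @ concat T2)" using cT dec sdec by simp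
        have "\<forall>u. prefix u sm \<and> strict_prefix s u \<longrightarrow> snd (last u) \<noteq> snd (last s)"
          using nl s sm by blast
        then have "p \<notin> snd ` set (b2 @ concat T2)" using nolater[of s "b2 @ concat T2" p] smdec ap by simp
        then have np: "p \<notin> fst ` set (concat (map swp T2))"
          unfolding swp_concat swp_fst by auto
        have bT: "b1 @ [(a,p)] @ b2 \<in> set T" using dec by simp
        then have "basic n (b1 @ [(a,p)] @ b2)" using greedy_blockD[OF gT] by blast
        then have dist: "distinct (map fst (swp (b1 @ [(a,p)] @ b2)))"
          by (simp add: basic_def swp_def comp_def case_prod_beta)
        have inb: "(p,a) \<in> set (swp (b1 @ [(a,p)] @ b2))" by (simp add: swp_set)
        have "map swp T = map swp T1 @ [swp (b1 @ [(a,p)] @ b2)] @ map swp T2" using dec by simp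
        then have "fst pos p = Some a \<and> snd pos p = Some (S (map swp T1) a)"
          unfolding pos_def using run_pebble[OF dist inb np] by simp
        moreover have "fv S n s = S (map swp T1) a" unfolding fv_def using al ap by simp
        ultimately show ?thesis using ap by simp
      qed
      have nsw: "\<not> spoiler_wins A B pos" using ws valid unfolding winning_strategy_def pos_def by blast
      define idx where "idx = map (\<lambda>s. snd (last s)) ss"
      have "set idx \<subseteq> dom (fst pos) \<inter> dom (snd pos)" using key unfolding idx_def by auto
      moreover have "map (the \<circ> fst pos) idx = map eps ss" unfolding idx_def eps_def using key by simp
      ultimately have "map (the \<circ> snd pos) idx \<in> rel B R" using nsw ea unfolding spoiler_wins_def by metis
      moreover have "map (the \<circ> snd pos) idx = map (fv S n) ss" unfolding idx_def using key by simp
      ultimately show ?thesis by simp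
    qed
    then show ?thesis using mf by simp
  qed
  have "is_hom (H_struc n k A) B f" unfolding is_hom_def H_struc_def using univ rel by simp
  then show ?thesis unfolding f_def .
qed


definition cls :: "nat \<Rightarrow> nat \<Rightarrow> ('r,'a) struc \<Rightarrow> ('a \<times> nat) list \<Rightarrow> ('a \<times> nat) list set" where
  "cls n k A s = approx_rel n k A `` {s}"

lemma cls_H: "s \<in> T_univ k A \<Longrightarrow> cls n k A s \<in> H_univ n k A"
  unfolding cls_def H_univ_def by (rule quotientI)

lemma cls_mem: "s \<in> T_univ k A \<Longrightarrow> s \<in> cls n k A s"
  unfolding cls_def by (simp add: approx_rel_def approx_def)

lemma cls_eq: "s \<in> T_univ k A \<Longrightarrow> t \<in> T_univ k A \<Longrightarrow> approx n s t \<Longrightarrow> cls n k A s = cls n k A t"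
  unfolding cls_def approx_rel_def approx_def by auto

lemma hom_T:
  assumes hom: "is_hom (H_struc n k A) B f" and ss: "ss \<in> T_rel k A R"
  shows "map (\<lambda>s. f (cls n k A s)) ss \<in> rel B R"
proof -
  have sT: "set ss \<subseteq> T_univ k A" using ss by (simp add: T_rel_def)
  let ?cs = "map (cls n k A) ss"
  have "set ?cs \<subseteq> H_univ n k A" using sT cls_H[of _ k A n] by auto
  moreover have "list_all2 (\<in>) ss ?cs" using sT cls_mem[of _ k A n]
    by (auto simp: list_all2_conv_all_nth dest!: nth_mem)
  ultimately have "?cs \<in> H_rel n k A R" unfolding H_rel_def using ss by blast
  then have "map f ?cs \<in> rel B R" using hom unfolding is_hom_def H_struc_def by (simp del: map_map)
  then show ?thesis by (simp add: comp_def)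
qed

lemma T_univ_last: "s \<in> T_univ k A \<Longrightarrow> fst (last s) \<in> univ A \<and> snd (last s) \<in> {1..k}"
proof -
  assume "s \<in> T_univ k A"
  then have "s \<noteq> []" "set s \<subseteq> univ A \<times> {1..k}" by (auto simp: T_univ_def)
  then have "last s \<in> univ A \<times> {1..k}" using last_in_set by blast
  then show ?thesis by (cases "last s") auto
qed

lemma I_lemma:
  assumes hom: "is_hom (H_struc n k A) B f" and IA: "I_struc I A" and IB: "I_struc I B"
    and sT: "s \<in> T_univ k A" and tT: "t \<in> T_univ k A" and st: "prefix s t"
    and e: "fst (last s) = fst (last t)"
    and nl: "\<forall>u. prefix u t \<and> strict_prefix s u \<longrightarrow> snd (last u) \<noteq> snd (last s)"
  shows "f (cls n k A s) = f (cls n k A t)"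
proof -
  have eA: "fst (last s) \<in> univ A" using T_univ_last[OF sT] by simp
  have "[s, t] \<in> T_rel k A I"
    unfolding T_rel_def
  proof (intro CollectI conjI)
    show "set [s, t] \<subseteq> T_univ k A" using sT tT by simp
    show "\<forall>x\<in>set [s, t]. \<forall>y\<in>set [s, t]. prefix x y \<or> prefix y x" using st by auto
    show "map eps [s, t] \<in> rel A I" using IA eA e unfolding I_struc_def eps_def by simp
    show "\<forall>x\<in>set [s, t]. \<forall>y\<in>set [s, t]. prefix x y \<longrightarrow>
        (\<forall>u. prefix u y \<and> strict_prefix x u \<longrightarrow> snd (last u) \<noteq> snd (last x))"
    proof (intro ballI impI allI)
      fix x y u assume xy: "x \<in> set [s,t]" "y \<in> set [s,t]" "prefix x y" and u: "prefix u y \<and> strict_prefix x u"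
      show "snd (last u) \<noteq> snd (last x)"
      proof (cases "x = s \<and> y = t")
        case True
        then show ?thesis using nl u by blast
      next
        case False
        then have "x = y" using xy st prefix_order.antisym by auto
        then show ?thesis using u prefix_order.less_le_not_le by blast
      qed
    qed
  qed
  from hom_T[OF hom this] have "[f (cls n k A s), f (cls n k A t)] \<in> rel B I" by simp
  then show ?thesis using IB unfolding I_struc_def by auto
qed

definition live :: "('a \<times> nat) list \<Rightarrow> ('a \<times> nat) list \<Rightarrow> nat \<Rightarrow> bool" where
  "live W s i \<longleftrightarrow> prefix s W \<and> s \<noteq> [] \<and> snd (last s) = i \<and>
     (\<forall>u. prefix u W \<and> strict_prefix s u \<longrightarrow> snd (last u) \<noteq> i)"

lemma live_self: "W \<noteq> [] \<Longrightarrow> live W W (snd (last W))"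
  unfolding live_def using prefix_order.less_le_not_le by blast

lemma live_append:
  assumes "live W s i" "i \<notin> snd ` set z"
  shows "live (W @ z) s i"
  unfolding live_def
proof (intro conjI allI impI)
  show "prefix s (W @ z)" "s \<noteq> []" "snd (last s) = i" using assms(1) by (auto simp: live_def)
  fix u assume u: "prefix u (W @ z) \<and> strict_prefix s u"
  then have "prefix u W \<or> (\<exists>us. u = W @ us \<and> prefix us z)" by (simp add: prefix_append)
  then show "snd (last u) \<noteq> i"
  proof
    assume "prefix u W"
    then show ?thesis using u assms(1) by (auto simp: live_def)
  next
    assume "\<exists>us. u = W @ us \<and> prefix us z"
    then obtain us where us: "u = W @ us" "prefix us z" by blast
    show ?thesis
    proof (cases "us = []")
      case True
      then show ?thesis using u us assms(1) by (auto simp: live_def)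
    next
      case False
      then have "last u \<in> set z" using us set_mono_prefix[OF us(2)] by auto
      then show ?thesis using assms(2) by force
    qed
  qed
qed

lemma live_elt:
  assumes "live W s q"
  shows "q \<in> snd ` set W \<and> fst (last (filter (\<lambda>x. snd x = q) W)) = fst (last s)"
proof -
  obtain r where W: "W = s @ r" using assms by (auto simp: live_def prefix_def)
  have sne: "s \<noteq> []" and sq: "snd (last s) = q" using assms by (auto simp: live_def)
  have "q \<notin> snd ` set r"
    using nolater[of s r q] assms W unfolding live_def by blast
  then have fr: "filter (\<lambda>x. snd x = q) r = []" by (auto simp: filter_empty_conv)
  obtain s' y where s': "s = s' @ [y]" using sne by (cases s rule: rev_cases) auto
  have "filter (\<lambda>x. snd x = q) W = filter (\<lambda>x. snd x = q) s' @ [y]" using W s' sq fr by simp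
  moreover have "q \<in> snd ` set W" using W s' sq by auto
  ultimately show ?thesis using s' by simp
qed


definition closedW :: "nat \<Rightarrow> nat \<Rightarrow> ('a \<times> nat) list \<Rightarrow> bool" where
  "closedW n k W \<longleftrightarrow> W = [] \<or> length (last (blocks n W)) = n \<or> {1..k} \<subseteq> snd ` set (last (blocks n W))"

definition missing :: "nat \<Rightarrow> nat \<Rightarrow> ('a \<times> nat) list \<Rightarrow> nat" where
  "missing n k W = (LEAST q. q \<in> {1..k} \<and> q \<notin> snd ` set (last (blocks n W)))"

definition elt :: "('a \<times> nat) list \<Rightarrow> nat \<Rightarrow> 'a" where
  "elt W q = (if q \<in> snd ` set W then fst (last (filter (\<lambda>x. snd x = q) W)) else fst (hd W))"

definition stp :: "nat \<Rightarrow> nat \<Rightarrow> ('a \<times> nat) list \<Rightarrow> ('a \<times> nat) list" where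
  "stp n k W = W @ [(elt W (missing n k W), missing n k W)]"

fun close_aux :: "nat \<Rightarrow> nat \<Rightarrow> nat \<Rightarrow> ('a \<times> nat) list \<Rightarrow> ('a \<times> nat) list" where
  "close_aux n k 0 W = W"
| "close_aux n k (Suc j) W = (if closedW n k W then W else close_aux n k j (stp n k W))"

definition close :: "nat \<Rightarrow> nat \<Rightarrow> ('a \<times> nat) list \<Rightarrow> ('a \<times> nat) list" where
  "close n k W = close_aux n k n W"

definition Inv :: "nat \<Rightarrow> nat \<Rightarrow> ('r,'a) struc \<Rightarrow> (('a \<times> nat) list set \<Rightarrow> 'b)
   \<Rightarrow> ('a \<times> nat) list \<Rightarrow> ('a,'b) pos \<Rightarrow> bool" where
  "Inv n k A f W pos \<longleftrightarrow> set W \<subseteq> univ A \<times> {1..k} \<and>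
     (\<forall>i \<in> dom (fst pos). \<exists>s. live W s i \<and> fst pos i = Some (fst (last s))
         \<and> snd pos i = Some (f (cls n k A s)))"

lemma basic_snoc_any: "basic n y \<Longrightarrow> basic n (y @ [(a,p)]) \<longleftrightarrow> basic n (y @ [(b,p)])"
  by (simp add: basic_snoc)

lemma lastblk_basic: "0 < n \<Longrightarrow> basic n (last (blocks n W))"
proof -
  assume n: "0 < n"
  have "last (blocks n W) \<in> set (blocks n W)"
    by (cases "W = []") (auto simp: blocks_Nil dest: blocks_greedy[OF n])
  then show ?thesis using blocks_basic[OF n] by blast
qed

lemma step_Inv:
  assumes n: "0 < n" and hom: "is_hom (H_struc n k A) B f" and IA: "I_struc I A" and IB: "I_struc I B"
    and W: "W \<noteq> []" and nc: "\<not> closedW n k W" and inv: "Inv n k A f W pos"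
  shows "Inv n k A f (stp n k W) pos \<and> stp n k W \<noteq> []
     \<and> length (last (blocks n (stp n k W))) = Suc (length (last (blocks n W)))"
proof -
  define T where "T = blocks n W"
  have gT: "greedy n T" and cT: "concat T = W" and Tne: "T \<noteq> []"
    using blocks_greedy[OF n W] T_def by auto
  define x where "x = last T"
  define T0 where "T0 = butlast T"
  have TT: "T = T0 @ [x]" using Tne T0_def x_def by simp
  have g0: "greedy n T0" and xne: "x \<noteq> []" and bx: "basic n x"
    and ch: "T0 \<noteq> [] \<longrightarrow> \<not> basic n (last T0 @ [hd x])"
    using gT TT greedy_append[of n T0 "[x]"] by auto
  define W0 where "W0 = concat T0"
  have WW: "W = W0 @ x" using cT TT W0_def by simp
  have WA: "set W \<subseteq> univ A \<times> {1..k}" using inv by (simp add: Inv_def)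
  have lx: "length x \<noteq> n" and ex: "\<exists>q. q \<in> {1..k} \<and> q \<notin> snd ` set x"
    using nc unfolding closedW_def T_def[symmetric] x_def[symmetric] using W by auto
  have lxn: "length x < n" using bx lx by (simp add: basic_def)
  define q where "q = missing n k W"
  have q: "q \<in> {1..k} \<and> q \<notin> snd ` set x"
    unfolding q_def missing_def T_def[symmetric] x_def[symmetric] using ex by (rule LeastI_ex)
  define e where "e = elt W q"
  have eA: "e \<in> univ A"
  proof (cases "q \<in> snd ` set W")
    case True
    then have "filter (\<lambda>x. snd x = q) W \<noteq> []" by (auto simp: filter_empty_conv)
    then have "last (filter (\<lambda>x. snd x = q) W) \<in> set W" using last_in_set by fastforce
    then show ?thesis using WA True unfolding e_def elt_def by auto
  next
    case False
    have "hd W \<in> set W" using W by simp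
    then show ?thesis using WA False unfolding e_def elt_def by auto
  qed
  have sW: "stp n k W = W @ [(e,q)]" unfolding stp_def e_def q_def ..
  have bxe: "basic n (x @ [(e,q)])" using bx lxn q by (simp add: basic_snoc)
  have g1: "greedy n (T0 @ [x @ [(e,q)]])"
    using g0 bxe ch xne by (simp add: greedy_append)
  have bl: "blocks n (stp n k W) = T0 @ [x @ [(e,q)]]"
    using blocks_concat[OF n g1] sW WW W0_def by simp
  have len: "length (last (blocks n (stp n k W))) = Suc (length (last (blocks n W)))"
    using bl T_def x_def by simp
  have set': "set (stp n k W) \<subseteq> univ A \<times> {1..k}" using sW WA eA q by auto
  have live': "\<exists>s. live (stp n k W) s i \<and> fst pos i = Some (fst (last s))
         \<and> snd pos i = Some (f (cls n k A s))" if idom: "i \<in> dom (fst pos)" for i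
  proof -
    obtain s where s: "live W s i" "fst pos i = Some (fst (last s))" "snd pos i = Some (f (cls n k A s))"
      using inv idom unfolding Inv_def by blast
    show ?thesis
    proof (cases "i = q")
      case False
      then have "live (stp n k W) s i" using live_append[OF s(1), of "[(e,q)]"] sW by simp
      then show ?thesis using s by blast
    next
      case True
      have sne: "s \<noteq> []" and sq: "snd (last s) = q" and sp: "prefix s W" using s(1) True by (auto simp: live_def)
      have ee: "e = fst (last s)" using live_elt[OF s(1)] True unfolding e_def elt_def by simp
      have sp0: "prefix s W0"
      proof -
        have "prefix s W0 \<or> (\<exists>us. s = W0 @ us \<and> prefix us x)" using sp WW by (simp add: prefix_append)
        then show ?thesis
        proof
          assume "\<exists>us. s = W0 @ us \<and> prefix us x"
          then obtain us where us: "s = W0 @ us" "prefix us x" by blast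
          show ?thesis
          proof (cases "us = []")
            case True then show ?thesis using us by simp
          next
            case False
            then have "last s \<in> set x" using us set_mono_prefix[OF us(2)] by auto
            then show ?thesis using q sq by force
          qed
        qed
      qed
      have W0ne: "W0 \<noteq> []" using sp0 sne by auto
      then have T0ne: "T0 \<noteq> []" using W0_def by auto
      obtain a1 p1 where hx: "hd x = (a1, p1)" by (cases "hd x")
      have hxin: "hd x \<in> set x" using xne by simp
      then have p1k: "p1 \<in> {1..k}" using WA WW hx by auto
      have p1q: "p1 \<noteq> q" using q hxin hx by force
      define t where "t = W0 @ [(e, p1)]"
      have tT: "t \<in> T_univ k A" using WA WW eA p1k unfolding t_def T_univ_def by auto
      define s' where "s' = stp n k W"
      have s'T: "s' \<in> T_univ k A" using set' unfolding s'_def T_univ_def sW by simp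
      have sT: "s \<in> T_univ k A" using sne sp WA set_mono_prefix unfolding T_univ_def by blast
      have bW: "blocks n W = T0 @ [x]" using T_def TT by simp
      have a1: "alpha n W q = T0"
        using alpha_eq[OF n, of W q e] bW bxe by (simp add: Let_def)
      have bl0: "blocks n W0 = T0" using blocks_concat[OF n g0 T0ne] W0_def by simp
      have lb: "basic n (last T0)" using greedy_blockD[OF g0] T0ne by simp
      have "\<not> basic n (last T0 @ [(a1, p1)])" using ch T0ne hx by simp
      then have "\<not> basic n (last T0 @ [(e, p1)])" using basic_snoc_any[OF lb, of e p1 a1] by simp
      then have a2: "alpha n W0 p1 = T0" using alpha_eq[OF n, of W0 p1 e] bl0 by simp
      have "approx n s' t" unfolding approx_def s'_def t_def sW using a1 a2 by simp
      then have eq1: "f (cls n k A s') = f (cls n k A t)" using cls_eq[OF s'T tT] by simp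
      have nlu: "\<forall>u. prefix u t \<and> strict_prefix s u \<longrightarrow> snd (last u) \<noteq> snd (last s)"
      proof (intro allI impI)
        fix u assume u: "prefix u t \<and> strict_prefix s u"
        then have "u = t \<or> prefix u W0" unfolding t_def by simp
        then show "snd (last u) \<noteq> snd (last s)"
        proof
          assume "u = t" then show ?thesis using p1q sq t_def by simp
        next
          assume "prefix u W0"
          then have "prefix u W" using WW by (simp add: prefix_prefix)
          then show ?thesis using s(1) u sq True unfolding live_def by blast
        qed
      qed
      have pst: "prefix s t" using sp0 t_def by simp
      have est: "fst (last s) = fst (last t)" using ee t_def by simp
      have eq2: "f (cls n k A s) = f (cls n k A t)" by (rule I_lemma[OF hom IA IB sT tT pst est nlu])
      have "live s' s' i" using live_self[of s'] True unfolding s'_def sW by simp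
      moreover have "fst pos i = Some (fst (last s'))" using s(2) ee unfolding s'_def sW by simp
      moreover have "snd pos i = Some (f (cls n k A s'))" using s(3) eq1 eq2 by simp
      ultimately show ?thesis unfolding s'_def by blast
    qed
  qed
  have "Inv n k A f (stp n k W) pos" unfolding Inv_def using set' live' by blast
  then show ?thesis using len sW by simp
qed


lemma close_aux_Inv:
  assumes n: "0 < n" and hom: "is_hom (H_struc n k A) B f" and IA: "I_struc I A" and IB: "I_struc I B"
  shows "Inv n k A f W pos \<Longrightarrow> (W \<noteq> [] \<longrightarrow> n \<le> j + length (last (blocks n W))) \<Longrightarrow>
    Inv n k A f (close_aux n k j W) pos \<and> closedW n k (close_aux n k j W)"
proof (induction j arbitrary: W)
  case 0
  show ?case
  proof (cases "W = []")
    case True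
    then show ?thesis using 0 by (simp add: closedW_def)
  next
    case False
    have "length (last (blocks n W)) \<le> n" using lastblk_basic[OF n, of W] by (simp add: basic_def)
    then have "length (last (blocks n W)) = n" using 0 False by simp
    then show ?thesis using 0 by (simp add: closedW_def)
  qed
next
  case (Suc j)
  show ?case
  proof (cases "closedW n k W")
    case True
    then show ?thesis using Suc.prems by simp
  next
    case False
    then have W: "W \<noteq> []" by (auto simp: closedW_def)
    have st: "Inv n k A f (stp n k W) pos \<and> stp n k W \<noteq> []
     \<and> length (last (blocks n (stp n k W))) = Suc (length (last (blocks n W)))"
      using step_Inv[OF n hom IA IB W False Suc.prems(1)] .
    have "Inv n k A f (close_aux n k j (stp n k W)) pos \<and> closedW n k (close_aux n k j (stp n k W))"
      using Suc.IH[of "stp n k W"] st Suc.prems(2) W by simp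
    then show ?thesis using False by simp
  qed
qed

lemma close_Inv:
  assumes n: "0 < n" and hom: "is_hom (H_struc n k A) B f" and IA: "I_struc I A" and IB: "I_struc I B"
    and inv: "Inv n k A f W pos"
  shows "Inv n k A f (close n k W) pos \<and> closedW n k (close n k W)"
  unfolding close_def using close_aux_Inv[OF n hom IA IB inv] by simp

lemma closed_alpha:
  assumes n: "0 < n" and c: "closedW n k C" and bx: "basic n (x @ [(a,p)])" and pk: "p \<in> {1..k}"
    and xk: "snd ` set x \<subseteq> {1..k}"
  shows "alpha n (C @ x) p = (if C = [] then [] else blocks n C)"
proof (cases "x = []")
  case True
  show ?thesis
  proof (cases "C = []")
    case True
    then show ?thesis using \<open>x = []\<close> n by (simp add: alpha_def blocks_Nil)
  next
    case False
    then have "length (last (blocks n C)) = n \<or> p \<in> snd ` set (last (blocks n C))"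
      using c pk unfolding closedW_def by blast
    then show ?thesis using False \<open>x = []\<close> by (simp add: alpha_def Let_def)
  qed
next
  case False
  have b: "basic n x" using bx basic_prefix[of n "x @ [(a,p)]" x] by (simp add: prefixI)
  show ?thesis
  proof (cases "C = []")
    case True
    have "greedy n [x]" using b False by simp
    then have "blocks n x = [x]" using blocks_concat[OF n, of "[x]"] by simp
    then show ?thesis using True alpha_eq[OF n, of x p a] bx by simp
  next
    case Cne: False
    have gC: "greedy n (blocks n C)" and cC: "concat (blocks n C) = C" and bCne: "blocks n C \<noteq> []"
      using blocks_greedy[OF n Cne] by auto
    obtain b1 p' where hx: "hd x = (b1, p')" by (cases "hd x")
    have "hd x \<in> set x" using False by simp
    then have p'k: "p' \<in> {1..k}" using xk hx by force
    have ly: "basic n (last (blocks n C))" using lastblk_basic[OF n] .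
    have "length (last (blocks n C)) = n \<or> p' \<in> snd ` set (last (blocks n C))"
      using c p'k Cne unfolding closedW_def by blast
    then have "\<not> basic n (last (blocks n C) @ [hd x])" using basic_snoc[OF ly] hx by auto
    then have "greedy n (blocks n C @ [x])" using gC b False bCne by (simp add: greedy_append)
    then have "blocks n (C @ x) = blocks n C @ [x]" using blocks_concat[OF n, of "blocks n C @ [x]"] cC by simp
    then show ?thesis using Cne alpha_eq[OF n, of "C @ x" p a] bx by simp
  qed
qed

definition sw2 :: "(nat \<times> 'a) list \<Rightarrow> ('a \<times> nat) list" where
  "sw2 m = map (\<lambda>(p,a). (a,p)) m"

lemma sw2_set: "(a,p) \<in> set (sw2 m) \<longleftrightarrow> (p,a) \<in> set m"
  by (auto simp: sw2_def)

lemma sw2_snd: "snd ` set (sw2 m) = fst ` set m"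
  by (force simp: sw2_def)

lemma sw2_distinct: "distinct (map snd (sw2 m)) = distinct (map fst m)"
  by (simp add: sw2_def comp_def case_prod_beta)

lemma move_Inv:
  assumes n: "0 < n" and k: "1 \<le> k" and c: "closedW n k C" and inv: "Inv n k A f C pos"
    and m: "valid_move n k A m"
  shows "Inv n k A f (C @ sw2 m) (upd (\<lambda>a. f (cls n k A (C @ [(a,1)]))) pos m)"
proof -
  define h where "h = (\<lambda>a. f (cls n k A (C @ [(a,1)])))"
  define xm where "xm = sw2 m"
  have CA: "set C \<subseteq> univ A \<times> {1..k}" using inv by (simp add: Inv_def)
  have dm: "distinct (map fst m)" and lm: "length m \<le> n" and sm: "set m \<subseteq> {1..k} \<times> univ A"
    using m by (auto simp: valid_move_def)
  have dx: "distinct (map snd xm)" using dm by (simp add: xm_def sw2_distinct)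
  have bxm: "basic n xm" using dx lm unfolding basic_def xm_def sw2_def by simp
  have xA: "set xm \<subseteq> univ A \<times> {1..k}" using sm unfolding xm_def sw2_def by auto
  have setok: "set (C @ xm) \<subseteq> univ A \<times> {1..k}" using CA xA by simp
  have L: "\<exists>s. live (C @ xm) s i \<and> fst (upd h pos m) i = Some (fst (last s))
         \<and> snd (upd h pos m) i = Some (f (cls n k A s))" if idom: "i \<in> dom (fst (upd h pos m))" for i
  proof (cases "i \<in> fst ` set m")
    case True
    then obtain a where ia: "(i,a) \<in> set m" by force
    have up: "fst (upd h pos m) i = Some a \<and> snd (upd h pos m) i = Some (h a)" using upd_in[OF dm ia] .
    have "(a,i) \<in> set xm" using ia sw2_set xm_def by metis
    then obtain l where l: "l < length xm" "xm ! l = (a,i)" by (metis in_set_conv_nth)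
    define s where "s = C @ take (Suc l) xm"
    have s2: "s = (C @ take l xm) @ [(a,i)]" using l unfolding s_def by (simp add: take_Suc_conv_app_nth)
    have Cxm: "C @ xm = s @ drop (Suc l) xm" unfolding s_def by simp
    have "i \<notin> snd ` set (drop (Suc l) xm)"
    proof -
      have "map snd xm = map snd (take (Suc l) xm) @ map snd (drop (Suc l) xm)"
        by (metis append_take_drop_id map_append)
      then have "set (map snd (take (Suc l) xm)) \<inter> set (map snd (drop (Suc l) xm)) = {}"
        using dx by (metis distinct_append)
      moreover have "(a,i) \<in> set (take (Suc l) xm)" using l
        by (metis in_set_conv_nth length_take lessI min_less_iff_conj nth_take)
      ultimately show ?thesis by force
    qed
    moreover have "s \<noteq> []" "snd (last s) = i" using s2 by simp_all
    ultimately have "live (s @ drop (Suc l) xm) s i" using live_append[OF live_self[of s]] by simp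
    then have lv: "live (C @ xm) s i" using Cxm by simp
    have "take (Suc l) xm = take l xm @ [(a,i)]" using l by (simp add: take_Suc_conv_app_nth)
    then have bt: "basic n (take l xm @ [(a,i)])"
      using basic_prefix[OF bxm take_is_prefix[of "Suc l" xm]] by simp
    have ik: "i \<in> {1..k}" and aA: "a \<in> univ A" using ia sm by auto
    have xk: "snd ` set (take l xm) \<subseteq> {1..k}" using xA set_take_subset by fastforce
    have al1: "alpha n (C @ take l xm) i = (if C = [] then [] else blocks n C)"
      using closed_alpha[OF n c bt ik xk] .
    have b1: "basic n ([] @ [(a,1::nat)])" using n by (simp add: basic_def)
    have al2: "alpha n (C @ []) 1 = (if C = [] then [] else blocks n C)"
      using closed_alpha[OF n c b1] k by simp
    have bs: "butlast s = C @ take l xm" and ls: "last s = (a,i)" using s2 by (simp_all only: butlast_snoc last_snoc)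
    have ap: "approx n s (C @ [(a,1)])" unfolding approx_def bs ls using al1 al2 by simp
    have "set s \<subseteq> set (C @ xm)" using Cxm by (metis set_append Un_upper1)
    then have sT: "s \<in> T_univ k A" using setok \<open>s \<noteq> []\<close> unfolding T_univ_def by blast
    have cT: "C @ [(a,1)] \<in> T_univ k A" using CA aA k unfolding T_univ_def by auto
    have "cls n k A s = cls n k A (C @ [(a,1)])" by (rule cls_eq[OF sT cT ap])
    then have feq: "f (cls n k A s) = h a" unfolding h_def by simp
    show ?thesis using lv up ls feq by (intro exI[of _ s]) simp
  next
    case False
    have eq: "fst (upd h pos m) i = fst pos i \<and> snd (upd h pos m) i = snd pos i" using upd_other[OF False] .
    then have "i \<in> dom (fst pos)" using idom by (simp add: domIff)
    then obtain s where s: "live C s i" "fst pos i = Some (fst (last s))" "snd pos i = Some (f (cls n k A s))"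
      using inv unfolding Inv_def by blast
    have "i \<notin> snd ` set xm" using False sw2_snd xm_def by metis
    then have "live (C @ xm) s i" using live_append[OF s(1)] by simp
    then show ?thesis using s eq by auto
  qed
  show ?thesis unfolding Inv_def h_def[symmetric] xm_def[symmetric] using setok L by blast
qed


definition Wof :: "nat \<Rightarrow> nat \<Rightarrow> (nat \<times> 'a) list list \<Rightarrow> ('a \<times> nat) list" where
  "Wof n k ms = fold (\<lambda>m W. close n k W @ sw2 m) ms []"

definition strat :: "nat \<Rightarrow> nat \<Rightarrow> ('r,'a) struc \<Rightarrow> (('a \<times> nat) list set \<Rightarrow> 'b)
   \<Rightarrow> (nat \<times> 'a) list list \<Rightarrow> 'a \<Rightarrow> 'b" where
  "strat n k A f ms = (\<lambda>a. f (cls n k A (close n k (Wof n k ms) @ [(a,1)])))"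

lemma Wof_snoc: "Wof n k (ms @ [m]) = close n k (Wof n k ms) @ sw2 m"
  by (simp add: Wof_def)

lemma run_Nil: "run S [] = (Map.empty, Map.empty)"
  by (simp add: run_def)

lemma main_Inv:
  assumes n: "0 < n" and k: "1 \<le> k" and hom: "is_hom (H_struc n k A) B f"
    and IA: "I_struc I A" and IB: "I_struc I B"
  shows "(\<forall>m\<in>set ms. valid_move n k A m) \<Longrightarrow> Inv n k A f (Wof n k ms) (run (strat n k A f) ms)"
proof (induction ms rule: rev_induct)
  case Nil
  then show ?case by (simp add: Wof_def run_Nil Inv_def)
next
  case (snoc m ms)
  let ?C = "close n k (Wof n k ms)"
  have "Inv n k A f (Wof n k ms) (run (strat n k A f) ms)" using snoc by simp
  then have ci: "Inv n k A f ?C (run (strat n k A f) ms) \<and> closedW n k ?C"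
    using close_Inv[OF n hom IA IB] by blast
  have vm: "valid_move n k A m" using snoc.prems by simp
  have "Inv n k A f (?C @ sw2 m) (upd (\<lambda>a. f (cls n k A (?C @ [(a,1)]))) (run (strat n k A f) ms) m)"
    using move_Inv[OF n k _ _ vm] ci by blast
  moreover have sm: "strat n k A f ms = (\<lambda>a. f (cls n k A (?C @ [(a,1)])))" unfolding strat_def ..
  ultimately show ?case by (simp only: Wof_snoc run_snoc sm)
qed

lemma Inv_not_spoiler:
  assumes hom: "is_hom (H_struc n k A) B f" and inv: "Inv n k A f W pos"
  shows "\<not> spoiler_wins A B pos"
proof
  assume "spoiler_wins A B pos"
  then obtain R idx where idx: "set idx \<subseteq> dom (fst pos) \<inter> dom (snd pos)"
    "map (the \<circ> fst pos) idx \<in> rel A R" "map (the \<circ> snd pos) idx \<notin> rel B R"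
    unfolding spoiler_wins_def by blast
  define P where "P = (\<lambda>i s. live W s i \<and> fst pos i = Some (fst (last s)) \<and> snd pos i = Some (f (cls n k A s)))"
  define sf where "sf = (\<lambda>i. SOME s. P i s)"
  have sfP: "P i (sf i)" if "i \<in> set idx" for i
  proof -
    have "\<exists>s. P i s" using inv idx(1) that unfolding Inv_def P_def by blast
    then show ?thesis unfolding sf_def by (rule someI_ex)
  qed
  have WA: "set W \<subseteq> univ A \<times> {1..k}" using inv by (simp add: Inv_def)
  define ss where "ss = map sf idx"
  have "ss \<in> T_rel k A R"
    unfolding T_rel_def
  proof (intro CollectI conjI)
    show "set ss \<subseteq> T_univ k A"
    proof
      fix s assume "s \<in> set ss"
      then obtain i where i: "i \<in> set idx" "s = sf i" unfolding ss_def by auto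
      then have "live W s i" using sfP P_def by blast
      then have "s \<noteq> []" "set s \<subseteq> set W" by (auto simp: live_def set_mono_prefix)
      then show "s \<in> T_univ k A" using WA unfolding T_univ_def by auto
    qed
    show "\<forall>s\<in>set ss. \<forall>t\<in>set ss. prefix s t \<or> prefix t s"
    proof (intro ballI)
      fix s t assume "s \<in> set ss" "t \<in> set ss"
      then obtain i j where "i \<in> set idx" "s = sf i" "j \<in> set idx" "t = sf j" unfolding ss_def by auto
      then have "prefix s W" "prefix t W" using sfP P_def live_def by blast+
      then show "prefix s t \<or> prefix t s" by (rule prefix_same_cases)
    qed
    have "map eps ss = map (the \<circ> fst pos) idx"
      unfolding ss_def eps_def using sfP P_def by auto
    then show "map eps ss \<in> rel A R" using idx(2) by simp
    show "\<forall>s\<in>set ss. \<forall>t\<in>set ss. prefix s t \<longrightarrow>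
            (\<forall>u. prefix u t \<and> strict_prefix s u \<longrightarrow> snd (last u) \<noteq> snd (last s))"
    proof (intro ballI impI allI)
      fix s t u assume st: "s \<in> set ss" "t \<in> set ss" "prefix s t" and u: "prefix u t \<and> strict_prefix s u"
      then obtain i j where ij: "i \<in> set idx" "s = sf i" "j \<in> set idx" "t = sf j" unfolding ss_def by auto
      then have ls: "live W s i" and lt: "live W t j" using sfP P_def by blast+
      then have "prefix u W" using u unfolding live_def using prefix_order.trans by blast
      then show "snd (last u) \<noteq> snd (last s)" using ls u unfolding live_def by blast
    qed
  qed
  then have "map (\<lambda>s. f (cls n k A s)) ss \<in> rel B R" using hom_T[OF hom] by blast
  moreover have "map (\<lambda>s. f (cls n k A s)) ss = map (the \<circ> snd pos) idx"
    unfolding ss_def using sfP P_def by auto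
  ultimately show False using idx(3) by simp
qed

lemma hom_to_game:
  assumes n: "0 < n" and k: "2 \<le> k" and hom: "is_hom (H_struc n k A) B f"
    and IA: "I_struc I A" and IB: "I_struc I B"
  shows "winning_strategy n k A B (strat n k A f)"
  unfolding winning_strategy_def
proof (intro allI impI conjI)
  fix ms assume vms: "\<forall>m\<in>set ms. valid_move n k A m"
  define pos where "pos = run (strat n k A f) ms"
  define C where "C = close n k (Wof n k ms)"
  have k1: "1 \<le> k" using k by simp
  have inv: "Inv n k A f (Wof n k ms) pos" using main_Inv[OF n k1 hom IA IB vms] pos_def by simp
  then show "\<not> spoiler_wins A B (run (strat n k A f) ms)" using Inv_not_spoiler[OF hom] pos_def by blast
  have ci: "Inv n k A f C pos" and cc: "closedW n k C" using close_Inv[OF n hom IA IB inv] C_def by auto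
  have CA: "set C \<subseteq> univ A \<times> {1..k}" using ci by (simp add: Inv_def)
  have al1: "alpha n C 1 = (if C = [] then [] else blocks n C)"
    using closed_alpha[OF n cc, of "[]" _ 1] k n by (simp add: basic_def)
  show "dup_legal A B (run (strat n k A f) ms) (strat n k A f ms)"
    unfolding dup_legal_def pos_def[symmetric]
  proof (intro conjI ballI)
    fix x assume x: "x \<in> univ A"
    have "C @ [(x,1)] \<in> T_univ k A" using CA x k unfolding T_univ_def by auto
    then have "cls n k A (C @ [(x,1)]) \<in> H_univ n k A" by (rule cls_H)
    then show "strat n k A f ms x \<in> univ B"
      using hom unfolding strat_def C_def[symmetric] is_hom_def H_struc_def by simp
  next
    fix i assume i: "i \<in> dom (fst pos)"
    then show "fst pos i \<noteq> None" by auto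
    obtain s where s: "live C s i" "fst pos i = Some (fst (last s))" "snd pos i = Some (f (cls n k A s))"
      using ci i unfolding Inv_def by blast
    define a where "a = fst (last s)"
    define q where "q = (if i = 1 then 2 else (1::nat))"
    have qk: "q \<in> {1..k}" and qi: "q \<noteq> i" using k unfolding q_def by auto
    have sne: "s \<noteq> []" and sp: "prefix s C" and si: "snd (last s) = i" using s(1) by (auto simp: live_def)
    have sT: "s \<in> T_univ k A" using sne sp CA set_mono_prefix unfolding T_univ_def by blast
    have aA: "a \<in> univ A" using T_univ_last[OF sT] a_def by simp
    define t where "t = C @ [(a,q)]"
    have tT: "t \<in> T_univ k A" using CA aA qk unfolding t_def T_univ_def by auto
    have t1T: "C @ [(a,1)] \<in> T_univ k A" using CA aA k unfolding T_univ_def by auto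
    have alq: "alpha n C q = (if C = [] then [] else blocks n C)"
      using closed_alpha[OF n cc, of "[]" a q] qk n by (simp add: basic_def)
    have "approx n t (C @ [(a,1)])" unfolding approx_def t_def using al1 alq by simp
    then have e1: "f (cls n k A t) = f (cls n k A (C @ [(a,1)]))" using cls_eq[OF tT t1T] by simp
    have pst: "prefix s t" using sp unfolding t_def by simp
    have est: "fst (last s) = fst (last t)" unfolding t_def a_def by simp
    have nlu: "\<forall>u. prefix u t \<and> strict_prefix s u \<longrightarrow> snd (last u) \<noteq> snd (last s)"
    proof (intro allI impI)
      fix u assume u: "prefix u t \<and> strict_prefix s u"
      then have "u = t \<or> prefix u C" unfolding t_def by simp
      then show "snd (last u) \<noteq> snd (last s)"
      proof
        assume "u = t" then show ?thesis using qi si t_def by simp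
      next
        assume "prefix u C"
        then show ?thesis using s(1) u si unfolding live_def by blast
      qed
    qed
    have e2: "f (cls n k A s) = f (cls n k A t)" by (rule I_lemma[OF hom IA IB sT tT pst est nlu])
    show "Some (strat n k A f ms (the (fst pos i))) = snd pos i"
      using s(2,3) e1 e2 unfolding strat_def C_def[symmetric] a_def by simp
  qed
qed

definition strat1 :: "nat \<Rightarrow> nat \<Rightarrow> ('r,'a) struc \<Rightarrow> (('a \<times> nat) list set \<Rightarrow> 'b)
   \<Rightarrow> (nat \<times> 'a) list list \<Rightarrow> 'a \<Rightarrow> 'b" where
  "strat1 n k A f ms = (\<lambda>a. f (cls n k A [(a,1)]))"

lemma hom_to_game1:
  assumes n: "0 < n" and k: "k = 1" and hom: "is_hom (H_struc n k A) B f"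
  shows "winning_strategy n k A B (strat1 n k A f)"
proof -
  define Inv1 where "Inv1 = (\<lambda>pos. \<forall>i::nat\<in>dom (fst pos). i = 1 \<and>
     (\<exists>a\<in>univ A. fst pos i = Some a \<and> snd pos i = Some (f (cls n k A [(a,1)]))))"
  have inv: "Inv1 (run (strat1 n k A f) ms)" if "\<forall>m\<in>set ms. valid_move n k A m" for ms
    using that
  proof (induction ms rule: rev_induct)
    case Nil
    then show ?case by (simp add: run_Nil Inv1_def)
  next
    case (snoc m ms)
    let ?pos = "run (strat1 n k A f) ms"
    have ip: "Inv1 ?pos" using snoc by simp
    have vm: "valid_move n k A m" using snoc.prems by simp
    then have dm: "distinct (map fst m)" and sm: "set m \<subseteq> {1..k} \<times> univ A" by (auto simp: valid_move_def)
    have "Inv1 (upd (strat1 n k A f ms) ?pos m)"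
      unfolding Inv1_def
    proof
      fix i assume i: "i \<in> dom (fst (upd (strat1 n k A f ms) ?pos m))"
      show "i = 1 \<and> (\<exists>a\<in>univ A. fst (upd (strat1 n k A f ms) ?pos m) i = Some a \<and>
            snd (upd (strat1 n k A f ms) ?pos m) i = Some (f (cls n k A [(a,1)])))"
      proof (cases "i \<in> fst ` set m")
        case True
        then obtain a where ia: "(i,a) \<in> set m" by force
        then have i1: "i = 1" and aA: "a \<in> univ A" using sm k by auto
        have "fst (upd (strat1 n k A f ms) ?pos m) i = Some a \<and>
              snd (upd (strat1 n k A f ms) ?pos m) i = Some (strat1 n k A f ms a)"
          by (rule upd_in[OF dm ia])
        moreover have "strat1 n k A f ms a = f (cls n k A [(a,1)])" unfolding strat1_def ..
        ultimately show ?thesis using i1 aA by auto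
      next
        case False
        note eq = upd_other[OF False, of "strat1 n k A f ms" ?pos]
        then have "i \<in> dom (fst ?pos)" using i by (simp add: domIff)
        then have "i = 1 \<and> (\<exists>a\<in>univ A. fst ?pos i = Some a \<and> snd ?pos i = Some (f (cls n k A [(a,1)])))"
          using ip unfolding Inv1_def by blast
        then obtain a where i1: "i = 1" and a: "a \<in> univ A" "fst ?pos i = Some a"
            "snd ?pos i = Some (f (cls n k A [(a,1)]))" by blast
        show ?thesis using eq i1 a by (intro conjI bexI[of _ a]) simp_all
      qed
    qed
    then show ?case by (simp add: run_snoc)
  qed
  show ?thesis
    unfolding winning_strategy_def
  proof (intro allI impI conjI)
    fix ms assume vms: "\<forall>m\<in>set ms. valid_move n k A m"
    define pos where "pos = run (strat1 n k A f) ms"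
    have ip: "Inv1 pos" using inv vms pos_def by simp
    have T1: "[(a,1)] \<in> T_univ k A" if "a \<in> univ A" for a using that k unfolding T_univ_def by simp
    show "dup_legal A B (run (strat1 n k A f) ms) (strat1 n k A f ms)"
      unfolding dup_legal_def pos_def[symmetric]
    proof (intro conjI ballI)
      fix x assume "x \<in> univ A"
      then have "cls n k A [(x,1)] \<in> H_univ n k A" using T1 cls_H by blast
      then show "strat1 n k A f ms x \<in> univ B" using hom unfolding strat1_def is_hom_def H_struc_def by simp
    next
      fix i assume i: "i \<in> dom (fst pos)"
      then show "fst pos i \<noteq> None" by auto
      have "i = 1 \<and> (\<exists>a\<in>univ A. fst pos i = Some a \<and> snd pos i = Some (f (cls n k A [(a,1)])))"
        using ip i unfolding Inv1_def by blast
      then obtain a where "fst pos i = Some a" "snd pos i = Some (f (cls n k A [(a,1)]))" by blast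
      then show "Some (strat1 n k A f ms (the (fst pos i))) = snd pos i"
        unfolding strat1_def by simp
    qed
    show "\<not> spoiler_wins A B (run (strat1 n k A f) ms)"
      unfolding pos_def[symmetric]
    proof
      assume "spoiler_wins A B pos"
      then obtain R idx where idx: "set idx \<subseteq> dom (fst pos) \<inter> dom (snd pos)"
        "map (the \<circ> fst pos) idx \<in> rel A R" "map (the \<circ> snd pos) idx \<notin> rel B R"
        unfolding spoiler_wins_def by blast
      have i1: "\<forall>i\<in>set idx. i = 1" using idx(1) ip unfolding Inv1_def by blast
      show False
      proof (cases "idx = []")
        case True
        have "[] \<in> T_rel k A R" using idx(2) True unfolding T_rel_def by simp
        then have "map (\<lambda>s. f (cls n k A s)) [] \<in> rel B R" by (rule hom_T[OF hom])
        then show False using idx(3) True by simp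
      next
        case False
        then have "1 \<in> dom (fst pos)" using i1 idx(1) by (cases idx) auto
        then obtain a where a: "a \<in> univ A" "fst pos 1 = Some a" "snd pos 1 = Some (f (cls n k A [(a,1)]))"
          using ip unfolding Inv1_def by blast
        define ss where "ss = map (\<lambda>i. [(a,1::nat)]) idx"
        have "ss \<in> T_rel k A R"
          unfolding T_rel_def
        proof (intro CollectI conjI)
          show "set ss \<subseteq> T_univ k A" using T1[OF a(1)] unfolding ss_def by auto
          show "\<forall>s\<in>set ss. \<forall>t\<in>set ss. prefix s t \<or> prefix t s" unfolding ss_def by auto
          have "map eps ss = map (the \<circ> fst pos) idx" unfolding ss_def eps_def using i1 a(2) by auto
          then show "map eps ss \<in> rel A R" using idx(2) by simp
          show "\<forall>s\<in>set ss. \<forall>t\<in>set ss. prefix s t \<longrightarrow>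
            (\<forall>u. prefix u t \<and> strict_prefix s u \<longrightarrow> snd (last u) \<noteq> snd (last s))"
            unfolding ss_def using prefix_order.less_le_not_le by auto
        qed
        then have "map (\<lambda>s. f (cls n k A s)) ss \<in> rel B R" by (rule hom_T[OF hom])
        moreover have "map (\<lambda>s. f (cls n k A s)) ss = map (the \<circ> snd pos) idx"
          unfolding ss_def using i1 a(3) by auto
        ultimately show False using idx(3) by simp
      qed
    qed
  qed
qed

theorem lemma3p10:
  fixes ar :: "'r::finite \<Rightarrow> nat" and I :: 'r
    and A :: "('r,'a) struc" and B :: "('r,'b) struc" and n k :: nat
  assumes "ar I = 2"
    and "wf_struc ar A" and "wf_struc ar B"
    and "I_struc I A" and "I_struc I B"
    and "1 \<le> n" and "n \<le> k"
  shows "(\<exists>f. is_hom (H_struc n k A) B f) \<longleftrightarrow> duplicator_wins n k A B"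
proof
  have n: "0 < n" using assms(6) by simp
  assume "\<exists>f. is_hom (H_struc n k A) B f"
  then obtain f where hom: "is_hom (H_struc n k A) B f" by blast
  show "duplicator_wins n k A B"
  proof (cases "k = 1")
    case True
    then show ?thesis using hom_to_game1[OF n True hom] unfolding duplicator_wins_def by blast
  next
    case False
    then have "2 \<le> k" using assms(6,7) by simp
    then show ?thesis using hom_to_game[OF n _ hom assms(4,5)] unfolding duplicator_wins_def by blast
  qed
next
  have n: "0 < n" using assms(6) by simp
  assume "duplicator_wins n k A B"
  then obtain S where "winning_strategy n k A B S" unfolding duplicator_wins_def by blast
  then show "\<exists>f. is_hom (H_struc n k A) B f" using dir_game_to_hom[OF n] by blast
qed


end
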